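(* For every component $c_i$, the value of information assessed by the heuristic satisfies $0\le \mathrm{VoI}_H(i)\le \mathrm{VoI}_L(i)$.
   Context: A system consists of $N$ binary components with random joint state $s\in\{0,1\}^N$ ($s_k=1$: working) with arbitrary prior distribution, system state $u=\phi(s)$ for a structure function $\phi:\{0,1\}^N\to\{0,1\}$. Inspecting $c_i$ yields a binary observation $y_i$ jointly distributed with $s$. Local metric: an action is $A=(a_1,\dots,a_N)\in\{0,1\}^N$ ($a_k=1$: replace $c_k$); replacement is perfect (post-action state $s'_k=1$ if $a_k=1$, $s'_k=s_k$ otherwise). The loss is $\mathcal{L}(s',A)=C_F(1-\phi(s'))+\sum_k a_kC_{R,k}$. The prior loss is $L_\pi=\min_A\mathbb{E}[\mathcal{L}(s',A)]$, attained by a prior optimal action $A_\pi=(a_{\pi,1},\dots,a_{\pi,N})$. The local expected posterior loss is $L^L_\omega(i)=\sum_{c\in\{0,1\}}\mathbb{P}[y_i=c]\min_A\mathbb{E}[\mathcal{L}(s',A)\mid y_i=c]$ and $\mathrm{VoI}_L(i)=L_\pi-L^L_\omega(i)$ (terms with zero probability omitted). Heuristic: after observing $y_i=c$, the posterior action $A_\omega(c)$ is chosen as follows. If $c\ne a_{\pi,i}$, then $A_\omega(c)=A_\pi$. If $c=a_{\pi,i}$, then $A_\omega(c)$ is whichever of $A_\pi$ and $A_\pi^{(i)}$ (the vector $A_\pi$ with its $i$-th entry flipped, all other entries unchanged) has lower conditional expected loss $\mathbb{E}[\mathcal{L}(s',A)\mid y_i=c]$. The heuristic value of information is $\mathrm{VoI}_H(i)=L_\pi-\sum_{c}\mathbb{P}[y_i=c]\,\mathbb{E}[\mathcal{L}(s',A_\omega(c))\mid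 y_i=c]$. *)

theory Defs
  imports "HOL-Probability.Probability_Mass_Function"
begin

text \<open>Components are indexed by a finite type 'n (so N = CARD('n)).
  A joint state is s :: 'n \<Rightarrow> bool (True = working).  The joint distribution of the
  component states and of all observations is a pmf M on pairs (s, y), with
  y :: 'n \<Rightarrow> bool the vector of (binary) observations; y i is the result of
  inspecting component i.  An action is A :: 'n \<Rightarrow> bool (True = replace).\<close>

definition post_state :: "('n \<Rightarrow> bool) \<Rightarrow> ('n \<Rightarrow> bool) \<Rightarrow> ('n \<Rightarrow> bool)" where
  "post_state s A = (\<lambda>k. if A k then True else s k)"

definition loss :: "(('n::finite \<Rightarrow> bool) \<Rightarrow> bool) \<Rightarrow> real \<Rightarrow> ('n \<Rightarrow> real)
    \<Rightarrow> ('n \<Rightarrow> bool) \<Rightarrow> ('n \<Rightarrow> bool) \<Rightarrow> real" where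
  "loss phi CF CR s' A = CF * (1 - (if phi s' then 1 else 0)) + (\<Sum>k\<in>UNIV. (if A k then 1 else 0) * CR k)"

definition exp_loss :: "((('n::finite \<Rightarrow> bool) \<times> ('n \<Rightarrow> bool)) pmf) \<Rightarrow> (('n \<Rightarrow> bool) \<Rightarrow> bool)
    \<Rightarrow> real \<Rightarrow> ('n \<Rightarrow> real) \<Rightarrow> ('n \<Rightarrow> bool) \<Rightarrow> real" where
  "exp_loss D phi CF CR A =
     measure_pmf.expectation D (\<lambda>sy. loss phi CF CR (post_state (fst sy) A) A)"

definition prior_loss :: "((('n::finite \<Rightarrow> bool) \<times> ('n \<Rightarrow> bool)) pmf) \<Rightarrow> (('n \<Rightarrow> bool) \<Rightarrow> bool)
    \<Rightarrow> real \<Rightarrow> ('n \<Rightarrow> real) \<Rightarrow> real" where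
  "prior_loss M phi CF CR = Min (range (exp_loss M phi CF CR))"

definition obs_event :: "'n \<Rightarrow> bool \<Rightarrow> (('n \<Rightarrow> bool) \<times> ('n \<Rightarrow> bool)) set" where
  "obs_event i c = {sy. snd sy i = c}"

definition obs_prob :: "((('n \<Rightarrow> bool) \<times> ('n \<Rightarrow> bool)) pmf) \<Rightarrow> 'n \<Rightarrow> bool \<Rightarrow> real" where
  "obs_prob M i c = measure_pmf.prob M (obs_event i c)"

text \<open>Conditional expected loss E[L(s',A) | y_i = c] (meaningful when obs_prob M i c > 0).\<close>
definition cond_exp_loss :: "((('n::finite \<Rightarrow> bool) \<times> ('n \<Rightarrow> bool)) pmf) \<Rightarrow> (('n \<Rightarrow> bool) \<Rightarrow> bool)
    \<Rightarrow> real \<Rightarrow> ('n \<Rightarrow> real) \<Rightarrow> 'n \<Rightarrow> bool \<Rightarrow> ('n \<Rightarrow> bool) \<Rightarrow> real" where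
  "cond_exp_loss M phi CF CR i c A = exp_loss (cond_pmf M (obs_event i c)) phi CF CR A"

definition local_post_loss :: "((('n::finite \<Rightarrow> bool) \<times> ('n \<Rightarrow> bool)) pmf) \<Rightarrow> (('n \<Rightarrow> bool) \<Rightarrow> bool)
    \<Rightarrow> real \<Rightarrow> ('n \<Rightarrow> real) \<Rightarrow> 'n \<Rightarrow> real" where
  "local_post_loss M phi CF CR i =
     (\<Sum>c\<in>{c. obs_prob M i c \<noteq> 0}. obs_prob M i c * Min (range (cond_exp_loss M phi CF CR i c)))"

definition VoI_L :: "((('n::finite \<Rightarrow> bool) \<times> ('n \<Rightarrow> bool)) pmf) \<Rightarrow> (('n \<Rightarrow> bool) \<Rightarrow> bool)
    \<Rightarrow> real \<Rightarrow> ('n \<Rightarrow> real) \<Rightarrow> 'n \<Rightarrow> real" where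
  "VoI_L M phi CF CR i = prior_loss M phi CF CR - local_post_loss M phi CF CR i"

text \<open>Heuristic posterior action, given a prior optimal action Api (ties resolved towards Api;
  this does not affect the value of VoI_H).\<close>
definition heur_action :: "((('n::finite \<Rightarrow> bool) \<times> ('n \<Rightarrow> bool)) pmf) \<Rightarrow> (('n \<Rightarrow> bool) \<Rightarrow> bool)
    \<Rightarrow> real \<Rightarrow> ('n \<Rightarrow> real) \<Rightarrow> ('n \<Rightarrow> bool) \<Rightarrow> 'n \<Rightarrow> bool \<Rightarrow> ('n \<Rightarrow> bool)" where
  "heur_action M phi CF CR Api i c =
     (if c \<noteq> Api i then Api
      else if cond_exp_loss M phi CF CR i c Api \<le> cond_exp_loss M phi CF CR i c (Api(i := \<not> Api i))
           then Api else Api(i := \<not> Api i))"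

definition VoI_H :: "((('n::finite \<Rightarrow> bool) \<times> ('n \<Rightarrow> bool)) pmf) \<Rightarrow> (('n \<Rightarrow> bool) \<Rightarrow> bool)
    \<Rightarrow> real \<Rightarrow> ('n \<Rightarrow> real) \<Rightarrow> ('n \<Rightarrow> bool) \<Rightarrow> 'n \<Rightarrow> real" where
  "VoI_H M phi CF CR Api i = prior_loss M phi CF CR -
     (\<Sum>c\<in>{c. obs_prob M i c \<noteq> 0}. obs_prob M i c *
        cond_exp_loss M phi CF CR i c (heur_action M phi CF CR Api i c))"

end

theory Submission imports Defs begin

lemma cond_sum:
  fixes M :: "('a::finite) pmf" and f :: "'a \<Rightarrow> real" and E :: "'a set"
  assumes "measure_pmf.prob M E \<noteq> 0"
  shows "measure_pmf.prob M E * measure_pmf.expectation (cond_pmf M E) f = (\<Sum>a\<in>E. f a * pmf M a)"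
proof -
  have ne: "set_pmf M \<inter> E \<noteq> {}" using assms measure_pmf_zero_iff[of M E] by simp
  have "measure_pmf.expectation (cond_pmf M E) f = (\<Sum>a\<in>UNIV. f a * pmf (cond_pmf M E) a)"
    by (rule integral_measure_pmf_real) auto
  also have "\<dots> = (\<Sum>a\<in>UNIV. if a \<in> E then f a * pmf M a / measure_pmf.prob M E else 0)"
    by (rule sum.cong) (auto simp: pmf_cond[OF ne])
  also have "\<dots> = (\<Sum>a\<in>E. f a * pmf M a / measure_pmf.prob M E)"
    by (simp add: sum.If_cases)
  finally show ?thesis using assms by (simp add: sum_divide_distrib[symmetric])
qed

lemma cond_zero:
  fixes M :: "('a::finite) pmf" and f :: "'a \<Rightarrow> real" and E :: "'a set"
  assumes "measure_pmf.prob M E = 0"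
  shows "(\<Sum>a\<in>E. f a * pmf M a) = 0"
proof -
  have "set_pmf M \<inter> E = {}" using assms measure_pmf_zero_iff[of M E] by simp
  then have "pmf M a = 0" if "a \<in> E" for a using that by (auto simp: set_pmf_iff)
  then show ?thesis by (intro sum.neutral) simp
qed

lemma total_exp:
  fixes M :: "('a::finite) pmf" and f :: "'a \<Rightarrow> real" and g :: "'a \<Rightarrow> bool"
  shows "measure_pmf.expectation M f =
    (\<Sum>c\<in>{c. measure_pmf.prob M {x. g x = c} \<noteq> 0}. measure_pmf.prob M {x. g x = c} *
        measure_pmf.expectation (cond_pmf M {x. g x = c}) f)"
proof -
  have "measure_pmf.expectation M f = (\<Sum>a\<in>UNIV. f a * pmf M a)"
    by (rule integral_measure_pmf_real) auto
  also have "\<dots> = (\<Sum>c\<in>UNIV. \<Sum>a\<in>{x. g x = c}. f a * pmf M a)"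
    using sum.group[of UNIV UNIV g "\<lambda>a. f a * pmf M a", symmetric] by simp
  also have "\<dots> = (\<Sum>c\<in>{c. measure_pmf.prob M {x. g x = c} \<noteq> 0}. \<Sum>a\<in>{x. g x = c}. f a * pmf M a)"
    by (rule sum.mono_neutral_right) (auto intro: cond_zero)
  also have "\<dots> = (\<Sum>c\<in>{c. measure_pmf.prob M {x. g x = c} \<noteq> 0}. measure_pmf.prob M {x. g x = c} *
        measure_pmf.expectation (cond_pmf M {x. g x = c}) f)"
    by (rule sum.cong) (auto simp: cond_sum)
  finally show ?thesis .
qed

lemma range_min_le: "Min (range (h :: ('n::finite \<Rightarrow> bool) \<Rightarrow> real)) \<le> h x"
  by (rule Min_le) auto

theorem mainTheorem6:
  fixes M :: "(('n::finite \<Rightarrow> bool) \<times> ('n \<Rightarrow> bool)) pmf"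
    and phi :: "('n \<Rightarrow> bool) \<Rightarrow> bool"
    and CF :: real and CR :: "'n \<Rightarrow> real"
    and Api :: "'n \<Rightarrow> bool" and i :: 'n
  assumes "exp_loss M phi CF CR Api = prior_loss M phi CF CR"
  shows "0 \<le> VoI_H M phi CF CR Api i \<and> VoI_H M phi CF CR Api i \<le> VoI_L M phi CF CR i"
proof -
  let ?S = "{c. obs_prob M i c \<noteq> 0}"
  let ?H = "\<lambda>c. cond_exp_loss M phi CF CR i c (heur_action M phi CF CR Api i c)"
  let ?C = "\<lambda>c. cond_exp_loss M phi CF CR i c Api"
  have tot: "exp_loss M phi CF CR Api = (\<Sum>c\<in>?S. obs_prob M i c * ?C c)"
    unfolding exp_loss_def cond_exp_loss_def obs_prob_def obs_event_def
    by (rule total_exp)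
  have p0: "obs_prob M i c \<ge> 0" for c unfolding obs_prob_def by simp
  have hle: "?H c \<le> ?C c" for c
    unfolding heur_action_def by auto
  have "(\<Sum>c\<in>?S. obs_prob M i c * ?H c) \<le> (\<Sum>c\<in>?S. obs_prob M i c * ?C c)"
    by (rule sum_mono) (rule mult_left_mono[OF hle p0])
  hence 1: "0 \<le> VoI_H M phi CF CR Api i"
    unfolding VoI_H_def using tot assms by simp
  have "(\<Sum>c\<in>?S. obs_prob M i c * Min (range (cond_exp_loss M phi CF CR i c))) \<le> (\<Sum>c\<in>?S. obs_prob M i c * ?H c)"
    by (rule sum_mono) (rule mult_left_mono[OF range_min_le p0])
  hence 2: "VoI_H M phi CF CR Api i \<le> VoI_L M phi CF CR i"
    unfolding VoI_H_def VoI_L_def local_post_loss_def by simp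
  show ?thesis using 1 2 by simp
qed

end
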